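(* Let $G=G_{p_1}\oplus\cdots\oplus G_{p_m}$ be a finite abelian group, with $p_1,\dots,p_m$ distinct primes and each $G_{p_j}=\mathbb{Z}_{p_j^{r_{j,1}}}^{k_{j,1}}\oplus\cdots\oplus\mathbb{Z}_{p_j^{r_{j,s_j}}}^{k_{j,s_j}}$ with $1\le r_{j,1}<\cdots<r_{j,s_j}$ and all $k_{j,i}\ge1$. Then the number of orbits of $\mathrm{Aut}(G)$ acting on the elements of $G$ equals the product over $j=1,\dots,m$ of the number of orbits of $\mathrm{Aut}(G_{p_j}^{rf})$ on $G_{p_j}^{rf}=\mathbb{Z}_{p_j^{r_{j,1}}}\oplus\cdots\oplus\mathbb{Z}_{p_j^{r_{j,s_j}}}$; that is, it equals $$\prod_{j=1}^m (r_{j,1}+1)\prod_{i=1}^{s_j-1}\bigl(r_{j,i+1}-r_{j,i}+1\bigr).$$ *)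

theory Defs
  imports "HOL-Algebra.Product_Groups" "HOL-Computational_Algebra.Primes"
begin

definition aut_orbit :: "('a, 'b) monoid_scheme \<Rightarrow> 'a \<Rightarrow> 'a set" where
  "aut_orbit G x = {\<phi> x | \<phi>. \<phi> \<in> iso G G}"

definition num_aut_orbits :: "('a, 'b) monoid_scheme \<Rightarrow> nat" where
  "num_aut_orbits G = card (aut_orbit G ` carrier G)"

definition reduced_group :: "nat \<Rightarrow> nat \<Rightarrow> (nat \<Rightarrow> nat) \<Rightarrow> (nat \<Rightarrow> int) monoid" where
  "reduced_group p s r = product_group {..<s} (\<lambda>i. integer_mod_group (p ^ r i))"

definition whole_group :: "nat \<Rightarrow> (nat \<Rightarrow> nat) \<Rightarrow> (nat \<Rightarrow> nat) \<Rightarrow> (nat \<Rightarrow> nat \<Rightarrow> nat)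
    \<Rightarrow> (nat \<Rightarrow> nat \<Rightarrow> nat) \<Rightarrow> (nat \<times> nat \<times> nat \<Rightarrow> int) monoid" where
  "whole_group m p s r k =
     product_group {(j, i, l). j < m \<and> i < s j \<and> l < k j i}
       (\<lambda>(j, i, l). integer_mod_group (p j ^ r j i))"

end

theory Submission
  imports Defs
begin


section \<open>Generic orbit facts\<close>

definition Tv :: "('a, 'b) monoid_scheme \<Rightarrow> 'a \<Rightarrow> (nat \<times> nat) set" where
  "Tv G x = {(u, w). \<exists>y\<in>carrier G. y [^]\<^bsub>G\<^esub> u = x [^]\<^bsub>G\<^esub> w}"

lemma aut_orbit_self: "x \<in> aut_orbit G x"
  unfolding aut_orbit_def using iso_set_refl by fastforce

lemma iso_in_aut_orbit: "\<phi> \<in> iso G G \<Longrightarrow> \<phi> x \<in> aut_orbit G x"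
  unfolding aut_orbit_def by blast

lemma aut_orbit_eq:
  assumes G: "group G" and x: "x \<in> carrier G" and y: "y \<in> aut_orbit G x"
  shows "aut_orbit G y = aut_orbit G x"
proof -
  obtain \<phi> where ph: "\<phi> \<in> iso G G" and yx: "y = \<phi> x"
    using y unfolding aut_orbit_def by blast
  have inj: "inj_on \<phi> (carrier G)" using ph by (simp add: iso_iff)
  have inv: "inv_into (carrier G) \<phi> \<in> iso G G"
    using group.iso_set_sym[OF G ph] .
  have xy: "x = inv_into (carrier G) \<phi> y" using yx inv_into_f_f[OF inj x] by simp
  show ?thesis
  proof
    show "aut_orbit G y \<subseteq> aut_orbit G x"
    proof
      fix z assume "z \<in> aut_orbit G y"
      then obtain \<psi> where "\<psi> \<in> iso G G" "z = \<psi> y" unfolding aut_orbit_def by blast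
      then have "(\<psi> \<circ> \<phi>) \<in> iso G G" "z = (\<psi> \<circ> \<phi>) x" using ph iso_set_trans yx by auto
      then show "z \<in> aut_orbit G x" unfolding aut_orbit_def by blast
    qed
    show "aut_orbit G x \<subseteq> aut_orbit G y"
    proof
      fix z assume "z \<in> aut_orbit G x"
      then obtain \<psi> where "\<psi> \<in> iso G G" "z = \<psi> x" unfolding aut_orbit_def by blast
      then have "(\<psi> \<circ> inv_into (carrier G) \<phi>) \<in> iso G G" "z = (\<psi> \<circ> inv_into (carrier G) \<phi>) y"
        using inv iso_set_trans xy by auto
      then show "z \<in> aut_orbit G y" unfolding aut_orbit_def by blast
    qed
  qed
qed

lemma Tv_iso:
  assumes G: "group G" and x: "x \<in> carrier G" and ph: "\<phi> \<in> iso G G"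
  shows "Tv G (\<phi> x) = Tv G x"
proof -
  have hom: "\<phi> \<in> hom G G" using ph by (simp add: iso_iff)
  have inj: "inj_on \<phi> (carrier G)" and sur: "\<phi> ` carrier G = carrier G" using ph by (auto simp add: iso_iff)
  have pw: "\<And>z n. z \<in> carrier G \<Longrightarrow> \<phi> (z [^]\<^bsub>G\<^esub> (n::nat)) = \<phi> z [^]\<^bsub>G\<^esub> n"
    using hom_nat_pow[OF hom _ G G] by blast
  have key: "\<And>u w. (\<exists>y\<in>carrier G. y [^]\<^bsub>G\<^esub> (u::nat) = \<phi> x [^]\<^bsub>G\<^esub> (w::nat))
      \<longleftrightarrow> (\<exists>y\<in>carrier G. y [^]\<^bsub>G\<^esub> u = x [^]\<^bsub>G\<^esub> w)"
  proof
    fix u w :: nat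
    assume "\<exists>y\<in>carrier G. y [^]\<^bsub>G\<^esub> u = \<phi> x [^]\<^bsub>G\<^esub> w"
    then obtain y where y: "y \<in> carrier G" "y [^]\<^bsub>G\<^esub> u = \<phi> x [^]\<^bsub>G\<^esub> w" by blast
    obtain y' where y': "y' \<in> carrier G" "y = \<phi> y'" using y(1) sur by blast
    have "\<phi> (y' [^]\<^bsub>G\<^esub> u) = \<phi> (x [^]\<^bsub>G\<^esub> w)" using pw[OF y'(1), of u] pw[OF x, of w] y y' by simp
    then have "y' [^]\<^bsub>G\<^esub> u = x [^]\<^bsub>G\<^esub> w"
      using inj_onD[OF inj] monoid.nat_pow_closed[OF group.is_monoid[OF G] y'(1), of u]
        monoid.nat_pow_closed[OF group.is_monoid[OF G] x, of w] by blast
    then show "\<exists>y\<in>carrier G. y [^]\<^bsub>G\<^esub> u = x [^]\<^bsub>G\<^esub> w" using y' by blast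
  next
    fix u w :: nat
    assume "\<exists>y\<in>carrier G. y [^]\<^bsub>G\<^esub> u = x [^]\<^bsub>G\<^esub> w"
    then obtain y where y: "y \<in> carrier G" "y [^]\<^bsub>G\<^esub> u = x [^]\<^bsub>G\<^esub> w" by blast
    have "\<phi> y [^]\<^bsub>G\<^esub> u = \<phi> x [^]\<^bsub>G\<^esub> w" using pw[OF y(1), of u] pw[OF x, of w] y(2) by simp
    moreover have "\<phi> y \<in> carrier G" by (rule hom_in_carrier[OF hom y(1)])
    ultimately show "\<exists>y\<in>carrier G. y [^]\<^bsub>G\<^esub> u = \<phi> x [^]\<^bsub>G\<^esub> w" by blast
  qed
  show ?thesis unfolding Tv_def using key by simp
qed

lemma Tv_orbit:
  assumes G: "group G" and x: "x \<in> carrier G" and y: "y \<in> aut_orbit G x"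
  shows "Tv G y = Tv G x"
  using y Tv_iso[OF G x] unfolding aut_orbit_def by blast

lemma mod_mult_dvd_int:
  fixes h z n n' :: int
  assumes "n' dvd h * n"
  shows "(h * (z mod n)) mod n' = (h * z) mod n'"
proof -
  obtain c where c: "h * n = n' * c" using assms by blast
  have "h * z = h * (z mod n) + (h * n) * (z div n)"
    by (metis distrib_left div_mult_mod_eq add.commute mult.assoc mult.commute)
  also have "\<dots> = h * (z mod n) + n' * (c * (z div n))" using c by simp
  finally show ?thesis by simp
qed



locale cyc =
  fixes I :: "'a set" and q :: "'a \<Rightarrow> nat" and e :: "'a \<Rightarrow> nat"
  assumes finI: "finite I" and qprime: "\<And>t. t \<in> I \<Longrightarrow> prime (q t)"
    and epos: "\<And>t. t \<in> I \<Longrightarrow> 1 \<le> e t"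
begin

definition nn :: "'a \<Rightarrow> int" where "nn t = int (q t) ^ e t"

definition GG :: "('a \<Rightarrow> int) monoid" where
  "GG = product_group I (\<lambda>t. integer_mod_group (q t ^ e t))"

lemma nn_gt1: "t \<in> I \<Longrightarrow> nn t > 1"
proof -
  assume t: "t \<in> I"
  have "int (q t) > 1" using qprime[OF t] prime_gt_1_nat by auto
  then show ?thesis unfolding nn_def using epos[OF t]
    by (simp add: one_less_power)
qed

lemma nn_pos: "t \<in> I \<Longrightarrow> nn t > 0" using nn_gt1 by force

lemma carrier_GG: "carrier GG = (\<Pi>\<^sub>E t\<in>I. {0..<nn t})"
proof -
  have "\<And>t. t \<in> I \<Longrightarrow> carrier (integer_mod_group (q t ^ e t)) = {0..<nn t}"
  proof -
    fix t assume t: "t \<in> I"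
    have "q t > 0" using qprime[OF t] by (simp add: prime_gt_0_nat)
    then have "carrier (integer_mod_group (q t ^ e t)) = {0..<int (q t ^ e t)}"
      by (simp add: carrier_integer_mod_group)
    then show "carrier (integer_mod_group (q t ^ e t)) = {0..<nn t}"
      by (simp add: nn_def)
  qed
  then show ?thesis unfolding GG_def by (auto simp: PiE_iff)
qed

lemma mult_GG: "x \<otimes>\<^bsub>GG\<^esub> y = (\<lambda>t\<in>I. (x t + y t) mod nn t)"
  by (simp add: GG_def nn_def)

lemma one_GG: "\<one>\<^bsub>GG\<^esub> = (\<lambda>t\<in>I. 0)"
  by (simp add: GG_def)

lemma group_GG: "group GG"
  unfolding GG_def by (rule product_group) simp

lemma finite_carrier_GG: "finite (carrier GG)"
  unfolding carrier_GG using finI by (simp add: finite_PiE)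

lemma pow_GG:
  assumes "x \<in> carrier GG"
  shows "x [^]\<^bsub>GG\<^esub> (w::nat) = (\<lambda>t\<in>I. (int w * x t) mod nn t)"
proof (induction w)
  case 0
  then show ?case by (simp add: one_GG)
next
  case (Suc w)
  have "x [^]\<^bsub>GG\<^esub> Suc w = (x [^]\<^bsub>GG\<^esub> w) \<otimes>\<^bsub>GG\<^esub> x" by simp
  also have "\<dots> = (\<lambda>t\<in>I. ((int w * x t) mod nn t + x t) mod nn t)"
    unfolding Suc mult_GG by (rule restrict_ext) simp
  also have "\<dots> = (\<lambda>t\<in>I. (int (Suc w) * x t) mod nn t)"
    by (rule restrict_ext) (simp add: mod_add_left_eq mod_add_right_eq algebra_simps)
  finally show ?case .
qed

lemma iso_of_inj:
  assumes hom: "f \<in> hom GG GG" and inj: "inj_on f (carrier GG)"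
  shows "f \<in> iso GG GG"
proof -
  have "f ` carrier GG \<subseteq> carrier GG" using hom hom_carrier by blast
  then have "f ` carrier GG = carrier GG" using endo_inj_surj finite_carrier_GG inj by blast
  then show ?thesis using hom inj by (simp add: iso_iff)
qed

definition scale :: "('a \<Rightarrow> int) \<Rightarrow> ('a \<Rightarrow> int) \<Rightarrow> ('a \<Rightarrow> int)" where
  "scale u x = (\<lambda>t\<in>I. (u t * x t) mod nn t)"

lemma scale_iso:
  assumes u: "\<And>t. t \<in> I \<Longrightarrow> coprime (u t) (nn t)"
  shows "scale u \<in> iso GG GG"
proof (rule iso_of_inj)
  show "scale u \<in> hom GG GG"
  proof (rule homI)
    fix x assume "x \<in> carrier GG"
    then show "scale u x \<in> carrier GG" unfolding carrier_GG scale_def using nn_pos by auto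
  next
    fix x y assume "x \<in> carrier GG" "y \<in> carrier GG"
    show "scale u (x \<otimes>\<^bsub>GG\<^esub> y) = scale u x \<otimes>\<^bsub>GG\<^esub> scale u y"
      unfolding scale_def mult_GG
      by (rule restrict_ext) (simp add: mod_mult_right_eq mod_add_eq distrib_left)
  qed
  show "inj_on (scale u) (carrier GG)"
  proof (rule inj_onI)
    fix x y assume x: "x \<in> carrier GG" and y: "y \<in> carrier GG" and eq: "scale u x = scale u y"
    show "x = y"
    proof (rule PiE_ext[of x I "\<lambda>t. {0..<nn t}" y])
      show "x \<in> (\<Pi>\<^sub>E t\<in>I. {0..<nn t})" "y \<in> (\<Pi>\<^sub>E t\<in>I. {0..<nn t})" using x y unfolding carrier_GG by auto
      fix t assume t: "t \<in> I"
      have "(u t * x t) mod nn t = (u t * y t) mod nn t"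
        using fun_cong[OF eq, of t] t unfolding scale_def by simp
      then have "nn t dvd u t * (x t - y t)" by (simp add: mod_eq_dvd_iff algebra_simps)
      then have "nn t dvd (x t - y t)" using u[OF t] coprime_dvd_mult_right_iff
        by (metis coprime_commute)
      then have "x t mod nn t = y t mod nn t" by (simp add: mod_eq_dvd_iff)
      moreover have "x t \<in> {0..<nn t}" "y t \<in> {0..<nn t}" using x y t unfolding carrier_GG by auto
      ultimately show "x t = y t" by simp
    qed
  qed
qed

end

context cyc begin
definition transv :: "'a \<Rightarrow> 'a \<Rightarrow> int \<Rightarrow> ('a \<Rightarrow> int) \<Rightarrow> ('a \<Rightarrow> int)" where
  "transv t t' h x = (\<lambda>s\<in>I. if s = t' then (x t' + h * x t) mod nn t' else x s)"

lemma transv_iso: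
  assumes t: "t \<in> I" and t': "t' \<in> I" and ne: "t \<noteq> t'" and dv: "nn t' dvd h * nn t"
  shows "transv t t' h \<in> iso GG GG"
proof (rule iso_of_inj)
  show "transv t t' h \<in> hom GG GG"
  proof (rule homI)
    fix x assume "x \<in> carrier GG"
    then show "transv t t' h x \<in> carrier GG" unfolding carrier_GG transv_def using nn_pos t' by auto
  next
    fix x y assume x: "x \<in> carrier GG" and y: "y \<in> carrier GG"
    show "transv t t' h (x \<otimes>\<^bsub>GG\<^esub> y) = transv t t' h x \<otimes>\<^bsub>GG\<^esub> transv t t' h y"
      unfolding transv_def mult_GG
    proof (rule restrict_ext)
      fix s assume s: "s \<in> I"
      show "(if s = t' then ((\<lambda>t\<in>I. (x t + y t) mod nn t) t' + h * (\<lambda>t\<in>I. (x t + y t) mod nn t) t) mod nn t'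
            else (\<lambda>t\<in>I. (x t + y t) mod nn t) s) =
          ((\<lambda>s\<in>I. if s = t' then (x t' + h * x t) mod nn t' else x s) s +
           (\<lambda>s\<in>I. if s = t' then (y t' + h * y t) mod nn t' else y s) s) mod nn s"
      proof (cases "s = t'")
        case True
        have "(h * ((x t + y t) mod nn t)) mod nn t' = (h * (x t + y t)) mod nn t'"
          by (rule mod_mult_dvd_int[OF dv])
        then have "((x t' + y t') mod nn t' + h * ((x t + y t) mod nn t)) mod nn t'
            = ((x t' + y t') + h * (x t + y t)) mod nn t'"
          by (simp only: mod_add_left_eq flip: mod_add_right_eq[of "x t' + y t'" "h * ((x t + y t) mod nn t)"])
             (simp add: mod_add_right_eq)
        also have "\<dots> = ((x t' + h * x t) mod nn t' + (y t' + h * y t) mod nn t') mod nn t'"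
          by (simp add: mod_add_eq algebra_simps)
        finally show ?thesis using True s t t' ne by simp
      qed (use s ne in simp)
    qed
  qed
  show "inj_on (transv t t' h) (carrier GG)"
  proof (rule inj_onI)
    fix x y assume x: "x \<in> carrier GG" and y: "y \<in> carrier GG" and eq: "transv t t' h x = transv t t' h y"
    have xt: "x t = y t" using fun_cong[OF eq, of t] t ne unfolding transv_def by simp
    show "x = y"
    proof (rule PiE_ext[of x I "\<lambda>t. {0..<nn t}" y])
      show "x \<in> (\<Pi>\<^sub>E t\<in>I. {0..<nn t})" "y \<in> (\<Pi>\<^sub>E t\<in>I. {0..<nn t})" using x y unfolding carrier_GG by auto
      fix s assume s: "s \<in> I"
      show "x s = y s"
      proof (cases "s = t'")
        case True
        have "(x t' + h * x t) mod nn t' = (y t' + h * x t) mod nn t'"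
          using fun_cong[OF eq, of t'] t' xt unfolding transv_def by simp
        then have "x t' mod nn t' = y t' mod nn t'"
          by (simp add: mod_eq_dvd_iff)
        moreover have "x t' \<in> {0..<nn t'}" "y t' \<in> {0..<nn t'}" using x y t' unfolding carrier_GG by auto
        ultimately show ?thesis using True by simp
      next
        case False
        then show ?thesis using fun_cong[OF eq, of s] s unfolding transv_def by simp
      qed
    qed
  qed
qed

end

context cyc begin

definition el :: "('a \<Rightarrow> nat) \<Rightarrow> ('a \<Rightarrow> int)" where
  "el v = (\<lambda>t\<in>I. (int (q t) ^ v t) mod nn t)"

lemma el_carrier: "el v \<in> carrier GG"
  unfolding el_def carrier_GG using nn_pos by auto

lemma el_cong: "(\<And>t. t \<in> I \<Longrightarrow> v t = v' t) \<Longrightarrow> el v = el v'"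
  unfolding el_def by (rule restrict_ext) simp

lemma orb_trans:
  assumes "x \<in> carrier GG" "y \<in> aut_orbit GG x" "z \<in> aut_orbit GG y"
  shows "z \<in> aut_orbit GG x"
  using aut_orbit_eq[OF group_GG assms(1,2)] assms(3) by simp

lemma int_prime: "t \<in> I \<Longrightarrow> prime (int (q t))"
  using qprime prime_nat_int_transfer by blast

lemma move:
  assumes t: "t \<in> I" and t': "t' \<in> I" and ne: "t \<noteq> t'"
    and dv: "nn t' dvd h * nn t"
    and val: "(int (q t') ^ v t' + h * int (q t) ^ v t) mod nn t' = int (q t') ^ v' mod nn t'"
  shows "el (v(t' := v')) \<in> aut_orbit GG (el v)"
proof -
  have "transv t t' h (el v) = el (v(t' := v'))"
    unfolding transv_def el_def
  proof (rule restrict_ext)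
    fix s assume s: "s \<in> I"
    show "(if s = t' then ((\<lambda>t\<in>I. int (q t) ^ v t mod nn t) t' + h * (\<lambda>t\<in>I. int (q t) ^ v t mod nn t) t) mod nn t'
          else (\<lambda>t\<in>I. int (q t) ^ v t mod nn t) s) = int (q s) ^ (v(t' := v')) s mod nn s"
    proof (cases "s = t'")
      case True
      have "(h * (int (q t) ^ v t mod nn t)) mod nn t' = (h * int (q t) ^ v t) mod nn t'"
        by (rule mod_mult_dvd_int[OF dv])
      then have "(int (q t') ^ v t' mod nn t' + h * (int (q t) ^ v t mod nn t)) mod nn t'
         = (int (q t') ^ v t' + h * int (q t) ^ v t) mod nn t'"
        by (simp only: mod_add_left_eq flip: mod_add_right_eq[of "int (q t') ^ v t'" "h * (int (q t) ^ v t mod nn t)"])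
           (simp add: mod_add_right_eq)
      then show ?thesis using True t t' val by simp
    qed (use s in simp)
  qed
  then show ?thesis using iso_in_aut_orbit[OF transv_iso[OF t t' ne dv], of "el v"] by simp
qed

lemma move_lower:
  assumes t: "t \<in> I" and t': "t' \<in> I" and ne: "t \<noteq> t'" and qq: "q t = q t'"
    and w: "v t + (e t' - e t) < v t'"
  shows "el (v(t' := v t + (e t' - e t))) \<in> aut_orbit GG (el v)"
proof -
  define P where "P = int (q t)"
  define w where "w = v t + (e t' - e t)"
  define h where "h = P ^ (e t' - e t) * (1 - P ^ (v t' - w))"
  have hv: "h * P ^ v t = P ^ w - P ^ v t'"
  proof -
    have "h * P ^ v t = P ^ (e t' - e t + v t) - P ^ (e t' - e t + v t + (v t' - w))"
      unfolding h_def by (simp add: algebra_simps power_add)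
    also have "e t' - e t + v t = w" unfolding w_def by simp
    also have "w + (v t' - w) = v t'" using w unfolding w_def by simp
    finally show ?thesis .
  qed
  have dv: "nn t' dvd h * nn t"
  proof -
    have "h * nn t = P ^ (e t' - e t + e t) * (1 - P ^ (v t' - w))"
      unfolding h_def nn_def P_def by (simp add: algebra_simps power_add)
    moreover have "P ^ e t' dvd P ^ (e t' - e t + e t)" by (rule le_imp_power_dvd) simp
    ultimately show ?thesis unfolding nn_def P_def using qq by simp
  qed
  have val: "(int (q t') ^ v t' + h * int (q t) ^ v t) mod nn t' = int (q t') ^ w mod nn t'"
    using hv qq unfolding P_def by simp
  show ?thesis using move[OF t t' ne dv val] unfolding w_def .
qed

lemma move_kill:
  assumes t: "t \<in> I" and t': "t' \<in> I" and ne: "t \<noteq> t'" and qq: "q t = q t'"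
    and w: "v t + (e t' - e t) \<le> v t'"
  shows "el (v(t' := e t')) \<in> aut_orbit GG (el v)"
proof -
  define P where "P = int (q t)"
  define w where "w = v t + (e t' - e t)"
  define h where "h = - (P ^ (e t' - e t) * P ^ (v t' - w))"
  have hv: "h * P ^ v t = - (P ^ v t')"
  proof -
    have "h * P ^ v t = - (P ^ (e t' - e t + v t + (v t' - w)))"
      unfolding h_def by (simp add: algebra_simps power_add)
    also have "e t' - e t + v t + (v t' - w) = v t'" using w unfolding w_def by simp
    finally show ?thesis .
  qed
  have dv: "nn t' dvd h * nn t"
  proof -
    have "h * nn t = - (P ^ (e t' - e t + e t) * P ^ (v t' - w))"
      unfolding h_def nn_def P_def by (simp add: algebra_simps power_add)
    moreover have "P ^ e t' dvd P ^ (e t' - e t + e t)" by (rule le_imp_power_dvd) simp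
    ultimately show ?thesis unfolding nn_def P_def using qq by simp
  qed
  have val: "(int (q t') ^ v t' + h * int (q t) ^ v t) mod nn t' = int (q t') ^ e t' mod nn t'"
    using hv qq unfolding P_def nn_def by simp
  show ?thesis using move[OF t t' ne dv val] .
qed

lemma coord_normal:
  assumes t: "t \<in> I" and z: "z \<in> {0..<nn t}"
  shows "\<exists>u k. coprime u (nn t) \<and> k \<le> e t \<and> (u * z) mod nn t = int (q t) ^ k mod nn t"
proof (cases "z = 0")
  case True
  then show ?thesis by (intro exI[of _ 1] exI[of _ "e t"]) (simp add: nn_def)
next
  case False
  define P where "P = int (q t)"
  have pP: "prime P" using int_prime[OF t] unfolding P_def .
  obtain y where zy: "z = P ^ multiplicity P z * y" and ny: "\<not> P dvd y"
    using multiplicity_decompose'[OF False] pP by (metis not_prime_unit)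
  define m where "m = multiplicity P z"
  have m: "m < e t"
  proof (rule ccontr)
    assume "\<not> m < e t"
    then have "P ^ e t dvd P ^ m" by (simp add: le_imp_power_dvd)
    then have "nn t dvd z" using zy unfolding m_def nn_def P_def by (metis dvd_mult2)
    then show False using z False by (auto dest: zdvd_imp_le)
  qed
  have cop: "coprime y (nn t)" unfolding nn_def using prime_imp_power_coprime[OF pP ny] P_def by simp
  obtain a b where ab: "a * y + b * nn t = 1"
    using bezout_int[of y "nn t"] cop by (auto simp: coprime_iff_gcd_eq_1)
  have copa: "coprime a (nn t)"
  proof (rule coprimeI)
    fix c assume "c dvd a" "c dvd nn t"
    then have "c dvd a * y + b * nn t" by simp
    then show "is_unit c" using ab by simp
  qed
  have ay: "a * y = 1 - b * nn t" using ab by simp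
  have "a * z = P ^ m * (a * y)" using zy unfolding m_def by (simp add: algebra_simps)
  also have "\<dots> = P ^ m - (P ^ m * b) * nn t" by (simp add: ay right_diff_distrib algebra_simps)
  finally have az: "a * z = P ^ m - (P ^ m * b) * nn t" .
  have "(a * z) mod nn t = P ^ m mod nn t" unfolding az by (simp add: mod_eq_dvd_iff)
  then show ?thesis using copa m unfolding P_def by (intro exI[of _ a] exI[of _ m]) simp
qed

lemma step0:
  assumes x: "x \<in> carrier GG"
  shows "\<exists>v. (\<forall>t\<in>I. v t \<le> e t) \<and> el v \<in> aut_orbit GG x"
proof -
  have "\<forall>t\<in>I. \<exists>uk. coprime (fst uk) (nn t) \<and> snd uk \<le> e t \<and> (fst uk * x t) mod nn t = int (q t) ^ snd uk mod nn t"
    using coord_normal x unfolding carrier_GG by fastforce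
  then obtain f where f: "\<And>t. t \<in> I \<Longrightarrow> coprime (fst (f t)) (nn t) \<and> snd (f t) \<le> e t \<and>
       (fst (f t) * x t) mod nn t = int (q t) ^ snd (f t) mod nn t"
    by metis
  have "scale (\<lambda>t. fst (f t)) x = el (\<lambda>t. snd (f t))"
    unfolding scale_def el_def by (rule restrict_ext) (use f in simp)
  moreover have "scale (\<lambda>t. fst (f t)) x \<in> aut_orbit GG x"
    by (rule iso_in_aut_orbit[OF scale_iso]) (use f in simp)
  ultimately show ?thesis using f by (intro exI[of _ "\<lambda>t. snd (f t)"]) simp
qed

end

context cyc begin

definition rep :: "'a \<Rightarrow> 'a" where
  "rep t = (SOME t'. t' \<in> I \<and> q t' = q t \<and> e t' = e t)"

lemma rep: "t \<in> I \<Longrightarrow> rep t \<in> I \<and> q (rep t) = q t \<and> e (rep t) = e t"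
  unfolding rep_def by (rule someI[of _ t]) simp

lemma rep_eq: "q t = q t' \<Longrightarrow> e t = e t' \<Longrightarrow> rep t = rep t'"
  unfolding rep_def by simp

lemma rep_rep: "t \<in> I \<Longrightarrow> rep (rep t) = rep t"
  by (rule rep_eq) (use rep in auto)

definition valid :: "('a \<Rightarrow> nat) \<Rightarrow> bool" where
  "valid v \<longleftrightarrow> (\<forall>t\<in>I. v t \<le> e t)"

definition nrz :: "('a \<Rightarrow> nat) \<Rightarrow> bool" where
  "nrz v \<longleftrightarrow> (\<forall>t\<in>I. rep t \<noteq> t \<longrightarrow> v t = e t)"

definition sat :: "('a \<Rightarrow> nat) \<Rightarrow> bool" where
  "sat v \<longleftrightarrow> (\<forall>r\<in>I. \<forall>r'\<in>I. rep r = r \<and> rep r' = r' \<and> q r = q r' \<longrightarrow> v r' \<le> v r + (e r' - e r))"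

lemma phase1:
  "\<forall>v. valid v \<longrightarrow> card {t\<in>I. rep t \<noteq> t \<and> v t < e t} = N \<longrightarrow>
     (\<exists>v'. valid v' \<and> nrz v' \<and> el v' \<in> aut_orbit GG (el v))"
proof (induction N rule: less_induct)
  case (less N)
  show ?case
  proof (intro allI impI)
    fix v assume val: "valid v" and cN: "card {t\<in>I. rep t \<noteq> t \<and> v t < e t} = N"
    show "\<exists>v'. valid v' \<and> nrz v' \<and> el v' \<in> aut_orbit GG (el v)"
    proof (cases "{t\<in>I. rep t \<noteq> t \<and> v t < e t} = {}")
      case True
      have "nrz v" unfolding nrz_def
      proof (intro ballI impI)
        fix s assume s: "s \<in> I" "rep s \<noteq> s"
        then have "\<not> v s < e s" using True by auto
        moreover have "v s \<le> e s" using val s unfolding valid_def by auto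
        ultimately show "v s = e s" by simp
      qed
      then show ?thesis using val aut_orbit_self[of "el v" GG] by blast
    next
      case False
      then obtain t where t: "t \<in> I" "rep t \<noteq> t" "v t < e t" by blast
      define r where "r = rep t"
      have r: "r \<in> I" "q r = q t" "e r = e t" using rep[OF t(1)] unfolding r_def by auto
      have rr: "rep r = r" unfolding r_def using rep_rep[OF t(1)] .
      have rt: "r \<noteq> t" using t(2) unfolding r_def by simp
      have fin: "finite {t\<in>I. rep t \<noteq> t \<and> v t < e t}" using finI by simp
      obtain v2 where v2o: "el v2 \<in> aut_orbit GG (el v)" and v2t: "v2 t = e t"
        and v2s: "\<And>s. s \<in> I \<Longrightarrow> s \<noteq> t \<Longrightarrow> s \<noteq> r \<Longrightarrow> v2 s = v s"
        and v2r: "v2 r \<le> e r"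
      proof (cases "v r \<le> v t")
        case True
        have "el (v(t := e t)) \<in> aut_orbit GG (el v)"
          by (rule move_kill[OF r(1) t(1) rt]) (use r True in auto)
        then show ?thesis by (rule that) (use rt val r(1) in \<open>auto simp: valid_def\<close>)
      next
        case False
        have o1: "el (v(r := v t)) \<in> aut_orbit GG (el v)"
          using move_lower[OF t(1) r(1) rt[symmetric], of v] r False by simp
        have o2: "el ((v(r := v t))(t := e t)) \<in> aut_orbit GG (el (v(r := v t)))"
          by (rule move_kill[OF r(1) t(1) rt]) (use r rt in auto)
        have "el ((v(r := v t))(t := e t)) \<in> aut_orbit GG (el v)"
          by (rule orb_trans[OF el_carrier o1 o2])
        then show ?thesis by (rule that) (use rt t r in auto)
      qed
      have val2: "valid v2" unfolding valid_def
      proof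
        fix s assume s: "s \<in> I"
        show "v2 s \<le> e s"
        proof (cases "s = t \<or> s = r")
          case True then show ?thesis using v2t v2r by auto
        next
          case False then show ?thesis using v2s[OF s] val s unfolding valid_def by auto
        qed
      qed
      have seteq: "{s\<in>I. rep s \<noteq> s \<and> v2 s < e s} = {s\<in>I. rep s \<noteq> s \<and> v s < e s} - {t}"
      proof (rule Set.set_eqI)
        fix s
        show "s \<in> {s\<in>I. rep s \<noteq> s \<and> v2 s < e s} \<longleftrightarrow> s \<in> {s\<in>I. rep s \<noteq> s \<and> v s < e s} - {t}"
        proof (cases "s = t \<or> s = r")
          case True then show ?thesis using v2t rr by auto
        next
          case False then show ?thesis using v2s[of s] by auto
        qed
      qed
      have lt: "card {s\<in>I. rep s \<noteq> s \<and> v2 s < e s} < N"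
        unfolding seteq cN[symmetric] by (rule card_Diff1_less[OF fin]) (use t in auto)
      obtain v' where "valid v'" "nrz v'" "el v' \<in> aut_orbit GG (el v2)"
        using less.IH[OF lt, rule_format, OF val2 refl] by blast
      then show ?thesis using orb_trans[OF el_carrier v2o] by blast
    qed
  qed
qed

lemma phase2:
  "\<forall>v. valid v \<longrightarrow> nrz v \<longrightarrow> (\<Sum>t\<in>I. v t) = N \<longrightarrow>
     (\<exists>v'. valid v' \<and> nrz v' \<and> sat v' \<and> el v' \<in> aut_orbit GG (el v))"
proof (induction N rule: less_induct)
  case (less N)
  show ?case
  proof (intro allI impI)
    fix v assume val: "valid v" and nz: "nrz v" and sN: "(\<Sum>t\<in>I. v t) = N"
    show "\<exists>v'. valid v' \<and> nrz v' \<and> sat v' \<and> el v' \<in> aut_orbit GG (el v)"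
    proof (cases "sat v")
      case True
      then show ?thesis using val nz aut_orbit_self[of "el v" GG] by blast
    next
      case False
      then obtain r r' where rr: "r \<in> I" "r' \<in> I" "rep r = r" "rep r' = r'" "q r = q r'"
        and lt: "v r + (e r' - e r) < v r'" unfolding sat_def by auto
      have ne: "r \<noteq> r'" using lt by auto
      define v1 where "v1 = v(r' := v r + (e r' - e r))"
      have o1: "el v1 \<in> aut_orbit GG (el v)" unfolding v1_def by (rule move_lower[OF rr(1,2) ne rr(5) lt])
      have "v r' \<le> e r'" using val rr(2) unfolding valid_def by blast
      then have val1: "valid v1" using val lt unfolding valid_def v1_def by simp
      have nz1: "nrz v1" using nz rr(4) unfolding nrz_def v1_def by auto
      have "(\<Sum>t\<in>I. v1 t) < (\<Sum>t\<in>I. v t)"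
        by (rule sum_strict_mono_ex1[OF finI]) (use lt rr(2) in \<open>auto simp: v1_def\<close>)
      then have lt: "(\<Sum>t\<in>I. v1 t) < N" using sN by simp
      obtain v' where "valid v'" "nrz v'" "sat v'" "el v' \<in> aut_orbit GG (el v1)"
        using less.IH[OF lt, rule_format, OF val1 nz1 refl] by blast
      then show ?thesis using orb_trans[OF el_carrier o1] by blast
    qed
  qed
qed

lemma reduce:
  assumes x: "x \<in> carrier GG"
  shows "\<exists>v. valid v \<and> nrz v \<and> sat v \<and> el v \<in> aut_orbit GG x"
proof -
  obtain v0 where v0: "valid v0" "el v0 \<in> aut_orbit GG x" using step0[OF x] unfolding valid_def by blast
  obtain v1 where v1: "valid v1" "nrz v1" "el v1 \<in> aut_orbit GG (el v0)" using phase1[rule_format, OF v0(1) refl] by blast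
  obtain v2 where v2: "valid v2" "nrz v2" "sat v2" "el v2 \<in> aut_orbit GG (el v1)" using phase2[rule_format, OF v1(1,2) refl] by blast
  have "el v1 \<in> aut_orbit GG x" using orb_trans[OF x v0(2) v1(3)] .
  then have "el v2 \<in> aut_orbit GG x" using orb_trans[OF x _ v2(4)] by blast
  then show ?thesis using v2 by blast
qed

definition D :: "('a \<Rightarrow> nat) set" where
  "D = {a \<in> I \<rightarrow>\<^sub>E (UNIV::nat set).
     (\<forall>t\<in>I. \<forall>t'\<in>I. q t = q t' \<and> e t = e t' \<longrightarrow> a t = a t') \<and> (\<forall>t\<in>I. a t \<le> e t) \<and>
     (\<forall>t\<in>I. \<forall>t'\<in>I. q t = q t' \<and> e t < e t' \<longrightarrow> a t \<le> a t' \<and> e t - a t \<le> e t' - a t')}"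

definition cc :: "('a \<Rightarrow> nat) \<Rightarrow> ('a \<Rightarrow> int)" where
  "cc a = el (\<lambda>t. if rep t = t then a t else e t)"

lemma finite_D: "finite D"
proof -
  have "D \<subseteq> (\<Pi>\<^sub>E t\<in>I. {..e t})" unfolding D_def by auto
  moreover have "finite (\<Pi>\<^sub>E t\<in>I. {..e t})" using finI by (simp add: finite_PiE)
  ultimately show ?thesis by (rule finite_subset)
qed

lemma reduce_D:
  assumes x: "x \<in> carrier GG"
  shows "\<exists>a\<in>D. cc a \<in> aut_orbit GG x"
proof -
  obtain v where v: "valid v" "nrz v" "sat v" "el v \<in> aut_orbit GG x" using reduce[OF x] by blast
  define a where "a = (\<lambda>t\<in>I. v (rep t))"
  have "cc a = el v" unfolding cc_def
    by (rule el_cong) (use v(2) in \<open>auto simp: a_def nrz_def\<close>)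
  moreover have "a \<in> D"
  proof -
    have A: "a \<in> I \<rightarrow>\<^sub>E (UNIV::nat set)" unfolding a_def by simp
    have B: "\<forall>t\<in>I. \<forall>t'\<in>I. q t = q t' \<and> e t = e t' \<longrightarrow> a t = a t'"
      unfolding a_def using rep_eq by (metis restrict_apply')
    have C: "\<forall>t\<in>I. a t \<le> e t"
    proof
      fix t assume t: "t \<in> I"
      have "v (rep t) \<le> e (rep t)" using v(1) rep[OF t] unfolding valid_def by blast
      then show "a t \<le> e t" using rep[OF t] t unfolding a_def by simp
    qed
    have E: "a t \<le> a t' \<and> e t - a t \<le> e t' - a t'"
      if t: "t \<in> I" "t' \<in> I" "q t = q t'" "e t < e t'" for t t'
    proof -
      define r where "r = rep t"
      define r' where "r' = rep t'"
      have r: "r \<in> I" "q r = q t" "e r = e t" "rep r = r" using rep[OF t(1)] rep_rep[OF t(1)] unfolding r_def by auto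
      have r': "r' \<in> I" "q r' = q t'" "e r' = e t'" "rep r' = r'" using rep[OF t(2)] rep_rep[OF t(2)] unfolding r'_def by auto
      have c: "rep r = r \<and> rep r' = r' \<and> q r = q r'" "rep r' = r' \<and> rep r = r \<and> q r' = q r" using r r' t(3) by auto
      have s1: "v r' \<le> v r + (e r' - e r)" using v(3) r(1) r'(1) c(1) unfolding sat_def by blast
      have s2: "v r \<le> v r' + (e r - e r')" using v(3) r(1) r'(1) c(2) unfolding sat_def by blast
      have b1: "v r \<le> e r" "v r' \<le> e r'" using v(1) r r' unfolding valid_def by auto
      have "a t = v r" "a t' = v r'" unfolding a_def r_def r'_def using t by auto
      then show ?thesis using s1 s2 b1 r r' t(4) by auto
    qed
    show ?thesis unfolding D_def using A B C E by blast
  qed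
  ultimately show ?thesis using v(4) by (intro bexI[of _ a]) simp_all
qed

end

context cyc begin

lemma cc_apply: "t \<in> I \<Longrightarrow> cc a t = (int (q t) ^ (if rep t = t then a t else e t)) mod nn t"
  unfolding cc_def el_def by simp

lemma D_blk: "a \<in> D \<Longrightarrow> t \<in> I \<Longrightarrow> t' \<in> I \<Longrightarrow> q t = q t' \<Longrightarrow> e t = e t' \<Longrightarrow> a t = a t'"
  unfolding D_def by blast
lemma D_le: "a \<in> D \<Longrightarrow> t \<in> I \<Longrightarrow> a t \<le> e t"
  unfolding D_def by blast
lemma D_mono: "a \<in> D \<Longrightarrow> t \<in> I \<Longrightarrow> t' \<in> I \<Longrightarrow> q t = q t' \<Longrightarrow> e t < e t' \<Longrightarrow> a t \<le> a t' \<and> e t - a t \<le> e t' - a t'"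
  unfolding D_def by blast
lemma D_ext: "a \<in> D \<Longrightarrow> a \<in> extensional I"
  unfolding D_def by (auto simp: PiE_def)

lemma sep:
  assumes a: "a \<in> D" and a': "a' \<in> D" and t: "t \<in> I" and lt: "a t < a' t"
  shows "Tv GG (cc a) \<noteq> Tv GG (cc a')"
proof -
  define P where "P = q t"
  define E where "E = e t"
  define \<beta> where "\<beta> = E - a t - 1"
  define A where "A = {s\<in>I. q s \<noteq> P}"
  define Mn where "Mn = (\<Prod>s\<in>A. q s ^ e s)"
  define u where "u = Mn * P ^ E"
  define w where "w = Mn * P ^ \<beta>"
  have pP: "prime P" using qprime[OF t] unfolding P_def .
  have finA: "finite A" unfolding A_def using finI by simp
  have a'E: "a' t \<le> E" using D_le[OF a' t] unfolding E_def .
  have aE: "a t + 1 \<le> E" using lt a'E by simp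
  have nnt: "nn t = int P ^ E" unfolding nn_def P_def E_def ..
  have F1: "\<not> P dvd Mn"
  proof
    assume "P dvd Mn"
    then have "\<exists>s\<in>A. P dvd q s ^ e s" unfolding Mn_def using prime_dvd_prod_iff[OF finA pP] by simp
    then obtain s where s: "s \<in> A" "P dvd q s ^ e s" by blast
    have sI: "s \<in> I" using s(1) unfolding A_def by simp
    have "P dvd q s" using prime_dvd_power[OF pP s(2)] .
    then have "P = q s" using primes_dvd_imp_eq[OF pP qprime[OF sI]] by simp
    then show False using s(1) unfolding A_def by simp
  qed
  have F2: "nn s dvd int Mn" if "s \<in> A" for s
  proof -
    have "q s ^ e s dvd Mn" unfolding Mn_def by (rule dvd_prodI[OF finA that])
    moreover have "nn s = int (q s ^ e s)" unfolding nn_def by simp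
    ultimately show ?thesis by (simp only: of_nat_dvd_iff)
  qed
  have notin: "(u, w) \<notin> Tv GG (cc a)"
  proof
    assume "(u, w) \<in> Tv GG (cc a)"
    then obtain y where y: "y \<in> carrier GG" "y [^]\<^bsub>GG\<^esub> u = cc a [^]\<^bsub>GG\<^esub> w" unfolding Tv_def by blast
    define r where "r = rep t"
    have r: "r \<in> I" "q r = q t" "e r = e t" "rep r = r" using rep[OF t] rep_rep[OF t] unfolding r_def by auto
    have ar: "a r = a t" using D_blk[OF a r(1) t r(2,3)] .
    have nnr: "nn r = int P ^ E" using r unfolding nn_def P_def E_def by simp
    have "(int u * y r) mod nn r = (int w * cc a r) mod nn r"
      using fun_cong[OF y(2), of r] pow_GG[OF y(1)] pow_GG[OF el_carrier] r(1)
      unfolding cc_def by simp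
    moreover have "(int u * y r) mod nn r = 0" unfolding nnr u_def by simp
    moreover have "(int w * cc a r) mod nn r = (int Mn * int P ^ (E - 1)) mod (int P ^ E)"
    proof -
      have "(int w * cc a r) mod nn r = (int w * int P ^ a t) mod nn r"
        using cc_apply[OF r(1), of a] r ar unfolding nnr P_def by (simp add: mod_mult_right_eq)
      also have "int w * int P ^ a t = int Mn * int P ^ (\<beta> + a t)" unfolding w_def by (simp add: power_add)
      also have "\<beta> + a t = E - 1" unfolding \<beta>_def using aE by simp
      finally show ?thesis unfolding nnr .
    qed
    ultimately have "int P ^ E dvd int Mn * int P ^ (E - 1)" by (simp add: nnr dvd_eq_mod_eq_0)
    moreover have "int P ^ E = int P ^ (E - 1) * int P"
    proof -
      have "E = Suc (E - 1)" using aE by simp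
      then show ?thesis by (metis power_Suc2)
    qed
    ultimately have "int P ^ (E - 1) * int P dvd int P ^ (E - 1) * int Mn" by (simp add: mult.commute)
    then have "int P dvd int Mn" using pP by (subst (asm) dvd_mult_cancel_left) (auto simp: prime_gt_0_nat)
    then show False using F1 by (simp add: of_nat_dvd_iff)
  qed
  define y where "y = (\<lambda>s\<in>I. if q s = P \<and> rep s = s \<and> \<beta> + a' s < e s then int P ^ (\<beta> + a' s - E) mod nn s else 0)"
  have ycar: "y \<in> carrier GG" unfolding y_def carrier_GG using nn_pos by auto
  have claim: "E \<le> \<beta> + a' s" if s: "s \<in> I" "q s = P" "\<beta> + a' s < e s" for s
  proof -
    have a's: "a' s \<le> e s" using D_le[OF a' s(1)] .
    consider "e s = E" | "E < e s" | "e s < E" by linarith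
    then show ?thesis
    proof cases
      case 1
      then have "a' s = a' t" using D_blk[OF a' s(1) t] s(2) unfolding P_def E_def by simp
      then show ?thesis unfolding \<beta>_def using lt aE by simp
    next
      case 2
      then have "a' t \<le> a' s" using D_mono[OF a' t s(1)] s(2) unfolding P_def E_def by simp
      then show ?thesis unfolding \<beta>_def using lt aE by simp
    next
      case 3
      then have "e s - a' s \<le> E - a' t" using D_mono[OF a' s(1) t] s(2) unfolding P_def E_def by simp
      then have False using s(3) a's a'E lt aE unfolding \<beta>_def by linarith
      then show ?thesis ..
    qed
  qed
  have "y [^]\<^bsub>GG\<^esub> u = cc a' [^]\<^bsub>GG\<^esub> w"
    unfolding pow_GG[OF ycar] cc_def pow_GG[OF el_carrier]
  proof (rule restrict_ext)
    fix s assume s: "s \<in> I"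
    show "int u * y s mod nn s = int w * el (\<lambda>t. if rep t = t then a' t else e t) s mod nn s"
    proof (cases "q s = P")
      case False
      then have "nn s dvd int Mn" using F2 s unfolding A_def by blast
      then have "nn s dvd int w * el (\<lambda>t. if rep t = t then a' t else e t) s" unfolding w_def by (simp add: mult.assoc)
      then show ?thesis using False s unfolding y_def by simp
    next
      case qs: True
      have nns: "nn s = int P ^ e s" unfolding nn_def using qs by simp
      have els: "el (\<lambda>t. if rep t = t then a' t else e t) s = int P ^ (if rep s = s then a' s else e s) mod nn s"
        unfolding el_def using s qs by simp
      show ?thesis
      proof (cases "rep s = s")
        case False
        then show ?thesis using s qs unfolding y_def els nns by simp
      next
        case rs: True
        have rhs: "int w * el (\<lambda>t. if rep t = t then a' t else e t) s mod nn s = int Mn * int P ^ (\<beta> + a' s) mod nn s"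
        proof -
          have "int w * el (\<lambda>t. if rep t = t then a' t else e t) s = (int Mn * int P ^ \<beta>) * (int P ^ a' s mod nn s)"
            unfolding els using rs by (simp add: w_def)
          then have "int w * el (\<lambda>t. if rep t = t then a' t else e t) s mod nn s = ((int Mn * int P ^ \<beta>) * int P ^ a' s) mod nn s"
            by (simp only: mod_mult_right_eq)
          also have "(int Mn * int P ^ \<beta>) * int P ^ a' s = int Mn * int P ^ (\<beta> + a' s)" by (simp add: power_add mult.assoc)
          finally show ?thesis .
        qed
        show ?thesis
        proof (cases "\<beta> + a' s < e s")
          case False
          then have "int P ^ e s dvd int P ^ (\<beta> + a' s)" by (simp add: le_imp_power_dvd)
          then have "nn s dvd int Mn * int P ^ (\<beta> + a' s)" unfolding nns by simp
          then show ?thesis unfolding rhs using False s unfolding y_def by simp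
        next
          case True
          have cl: "E \<le> \<beta> + a' s" using claim[OF s qs True] .
          have "int u * y s mod nn s = int u * int P ^ (\<beta> + a' s - E) mod nn s"
            using s qs rs True unfolding y_def by (simp add: mod_mult_right_eq)
          also have "int u * int P ^ (\<beta> + a' s - E) = int Mn * int P ^ (E + (\<beta> + a' s - E))"
            unfolding u_def by (simp add: power_add)
          also have "E + (\<beta> + a' s - E) = \<beta> + a' s" using cl by simp
          finally show ?thesis unfolding rhs .
        qed
      qed
    qed
  qed
  then have "(u, w) \<in> Tv GG (cc a')" unfolding Tv_def using ycar by blast
  then show ?thesis using notin by blast
qed

theorem num_orbits_GG: "num_aut_orbits GG = card D"
proof -
  have img: "aut_orbit GG ` carrier GG = (\<lambda>a. aut_orbit GG (cc a)) ` D"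
  proof
    show "aut_orbit GG ` carrier GG \<subseteq> (\<lambda>a. aut_orbit GG (cc a)) ` D"
    proof
      fix Ob assume "Ob \<in> aut_orbit GG ` carrier GG"
      then obtain x where x: "x \<in> carrier GG" "Ob = aut_orbit GG x" by blast
      obtain a where a: "a \<in> D" "cc a \<in> aut_orbit GG x" using reduce_D[OF x(1)] by blast
      have "aut_orbit GG (cc a) = aut_orbit GG x" by (rule aut_orbit_eq[OF group_GG x(1) a(2)])
      then show "Ob \<in> (\<lambda>a. aut_orbit GG (cc a)) ` D" using a(1) x(2) by blast
    qed
    show "(\<lambda>a. aut_orbit GG (cc a)) ` D \<subseteq> aut_orbit GG ` carrier GG"
      unfolding cc_def using el_carrier by blast
  qed
  have inj: "inj_on (\<lambda>a. aut_orbit GG (cc a)) D"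
  proof (rule inj_onI)
    fix a a' assume a: "a \<in> D" and a': "a' \<in> D" and eq: "aut_orbit GG (cc a) = aut_orbit GG (cc a')"
    have "cc a' \<in> aut_orbit GG (cc a)" using eq aut_orbit_self[of "cc a'" GG] by simp
    moreover have cca: "cc a \<in> carrier GG" by (simp add: cc_def el_carrier)
    ultimately have T: "Tv GG (cc a') = Tv GG (cc a)" using Tv_orbit[OF group_GG] by blast
    show "a = a'"
    proof (rule ccontr)
      assume "a \<noteq> a'"
      moreover have "a \<in> extensional I" "a' \<in> extensional I" using D_ext a a' by auto
      ultimately obtain t where t: "t \<in> I" "a t \<noteq> a' t" by (meson extensionalityI)
      then consider "a t < a' t" | "a' t < a t" by linarith
      then show False
      proof cases
        case 1 then show False using sep[OF a a' t(1)] T by simp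
      next
        case 2 then show False using sep[OF a' a t(1)] T by simp
      qed
    qed
  qed
  show ?thesis unfolding num_aut_orbits_def img using card_image[OF inj] .
qed

end


definition Seq :: "nat \<Rightarrow> (nat \<Rightarrow> nat) \<Rightarrow> (nat \<Rightarrow> nat) set" where
  "Seq n r = {b \<in> {..<n} \<rightarrow>\<^sub>E (UNIV::nat set). (\<forall>i<n. b i \<le> r i) \<and>
     (\<forall>i<n. \<forall>i'<n. i < i' \<longrightarrow> b i \<le> b i' \<and> r i - b i \<le> r i' - b i')}"

lemma strict_from_cons:
  fixes r :: "nat \<Rightarrow> nat" and n i i' :: nat
  assumes "\<And>i. i + 1 < n \<Longrightarrow> r i < r (i + 1)"
  shows "i < i' \<Longrightarrow> i' < n \<Longrightarrow> r i < r i'"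
proof (induction i')
  case 0 then show ?case by simp
next
  case (Suc i')
  show ?case
  proof (cases "i = i'")
    case True then show ?thesis using assms(1)[of i'] Suc by simp
  next
    case False
    then have "r i < r i'" using Suc by simp
    also have "r i' < r (Suc i')" using assms(1)[of i'] Suc by simp
    finally show ?thesis .
  qed
qed

lemma finite_Seq: "finite (Seq n r)"
proof -
  have "Seq n r \<subseteq> (\<Pi>\<^sub>E i\<in>{..<n}. {..r i})" unfolding Seq_def by auto
  moreover have "finite (\<Pi>\<^sub>E i\<in>{..<n}. {..r i})" by (simp add: finite_PiE)
  ultimately show ?thesis by (rule finite_subset)
qed

lemma card_Seq1: "card (Seq 1 r) = r 0 + 1"
proof -
  have "bij_betw (\<lambda>b. b 0) (Seq 1 r) {..r 0}"
  proof (rule bij_betw_byWitness[where f' = "\<lambda>y. (\<lambda>i\<in>{..<1}. y)"])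
    show "\<forall>b\<in>Seq 1 r. (\<lambda>i\<in>{..<1}. b 0) = b"
    proof
      fix b assume b: "b \<in> Seq 1 r"
      show "(\<lambda>i\<in>{..<1::nat}. b 0) = b"
      proof
        fix i show "(\<lambda>i\<in>{..<1::nat}. b 0) i = b i"
          using b unfolding Seq_def by (cases "i = 0") (auto simp: PiE_def extensional_def)
      qed
    qed
    show "\<forall>y\<in>{..r 0}. (\<lambda>i\<in>{..<1::nat}. y) 0 = y" by simp
    show "(\<lambda>b. b 0) ` Seq 1 r \<subseteq> {..r 0}" unfolding Seq_def by auto
    show "(\<lambda>y. \<lambda>i\<in>{..<1::nat}. y) ` {..r 0} \<subseteq> Seq 1 r" by (auto simp: Seq_def PiE_def extensional_def)
  qed
  then show ?thesis by (simp add: bij_betw_same_card)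
qed

lemma card_Seq_step:
  assumes inc: "\<And>i. i + 1 < Suc n \<Longrightarrow> r i < r (i + 1)" and n: "1 \<le> n"
  shows "card (Seq (Suc n) r) = card (Seq n r) * (r n - r (n - 1) + 1)"
proof -
  define B where "B = (\<lambda>b::nat\<Rightarrow>nat. {b (n - 1) .. b (n - 1) + (r n - r (n - 1))})"
  have rn: "r (n - 1) < r n" using inc[of "n - 1"] n by simp
  have bij: "bij_betw (\<lambda>b. (restrict b {..<n}, b n)) (Seq (Suc n) r) (Sigma (Seq n r) B)"
  proof (rule bij_betw_byWitness[where f' = "\<lambda>(b, y). (restrict b {..<n})(n := y)"])
    show "\<forall>b\<in>Seq (Suc n) r. (\<lambda>(b, y). (restrict b {..<n})(n := y)) (restrict b {..<n}, b n) = b"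
    proof
      fix b assume b: "b \<in> Seq (Suc n) r"
      show "(\<lambda>(b, y). (restrict b {..<n})(n := y)) (restrict b {..<n}, b n) = b"
      proof
        fix i show "((\<lambda>(b, y). (restrict b {..<n})(n := y)) (restrict b {..<n}, b n)) i = b i"
          using b unfolding Seq_def by (auto simp: PiE_def extensional_def)
      qed
    qed
    show "\<forall>p\<in>Sigma (Seq n r) B. (\<lambda>b. (restrict b {..<n}, b n)) ((\<lambda>(b, y). (restrict b {..<n})(n := y)) p) = p"
    proof
      fix p assume p: "p \<in> Sigma (Seq n r) B"
      obtain b y where pby: "p = (b, y)" by fastforce
      have b: "b \<in> Seq n r" using p pby by simp
      have "restrict ((restrict b {..<n})(n := y)) {..<n} = b"
      proof
        fix i show "restrict ((restrict b {..<n})(n := y)) {..<n} i = b i"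
          using b unfolding Seq_def by (auto simp: PiE_def extensional_def)
      qed
      then show "(\<lambda>b. (restrict b {..<n}, b n)) ((\<lambda>(b, y). (restrict b {..<n})(n := y)) p) = p"
        using pby by simp
    qed
    show "(\<lambda>b. (restrict b {..<n}, b n)) ` Seq (Suc n) r \<subseteq> Sigma (Seq n r) B"
    proof
      fix p assume "p \<in> (\<lambda>b. (restrict b {..<n}, b n)) ` Seq (Suc n) r"
      then obtain b where b: "b \<in> Seq (Suc n) r" and p: "p = (restrict b {..<n}, b n)" by blast
      have bnd: "\<forall>i<Suc n. b i \<le> r i" and mono: "\<forall>i<Suc n. \<forall>i'<Suc n. i < i' \<longrightarrow> b i \<le> b i' \<and> r i - b i \<le> r i' - b i'"
        using b unfolding Seq_def by auto
      have "restrict b {..<n} \<in> Seq n r" unfolding Seq_def using bnd mono by auto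
      moreover have "b n \<in> B (restrict b {..<n})"
      proof -
        have "b (n - 1) \<le> b n \<and> r (n - 1) - b (n - 1) \<le> r n - b n" using mono n by simp
        moreover have "b (n - 1) \<le> r (n - 1)" "b n \<le> r n" using bnd n by auto
        ultimately have "b n \<le> b (n - 1) + (r n - r (n - 1))" using rn by linarith
        moreover have "b (n - 1) \<le> b n" using mono n by simp
        ultimately show ?thesis unfolding B_def using n by simp
      qed
      ultimately show "p \<in> Sigma (Seq n r) B" using p by simp
    qed
    show "(\<lambda>(b, y). (restrict b {..<n})(n := y)) ` Sigma (Seq n r) B \<subseteq> Seq (Suc n) r"
    proof
      fix c assume "c \<in> (\<lambda>(b, y). (restrict b {..<n})(n := y)) ` Sigma (Seq n r) B"
      then obtain p where p: "p \<in> Sigma (Seq n r) B" "c = (\<lambda>(b, y). (restrict b {..<n})(n := y)) p" by blast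
      obtain b y where pby: "p = (b, y)" by fastforce
      have b: "b \<in> Seq n r" and y: "y \<in> B b" using p(1) pby by auto
      have c: "c = (restrict b {..<n})(n := y)" using p(2) pby by simp
      have bnd: "\<forall>i<n. b i \<le> r i" and mono: "\<forall>i<n. \<forall>i'<n. i < i' \<longrightarrow> b i \<le> b i' \<and> r i - b i \<le> r i' - b i'"
        using b unfolding Seq_def by auto
      have y1: "b (n - 1) \<le> y" and y2: "y \<le> b (n - 1) + (r n - r (n - 1))" using y unfolding B_def by auto
      have bn1: "b (n - 1) \<le> r (n - 1)" using bnd n by simp
      have ext: "c \<in> {..<Suc n} \<rightarrow>\<^sub>E (UNIV::nat set)" unfolding c by (auto simp: PiE_def extensional_def)
      have cb: "\<forall>i<Suc n. c i \<le> r i"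
      proof (intro allI impI)
        fix i assume "i < Suc n"
        then show "c i \<le> r i" using bnd y2 bn1 rn unfolding c by (cases "i = n") auto
      qed
      have cm: "\<forall>i<Suc n. \<forall>i'<Suc n. i < i' \<longrightarrow> c i \<le> c i' \<and> r i - c i \<le> r i' - c i'"
      proof (intro allI impI)
        fix i i' assume i: "i < Suc n" and i': "i' < Suc n" and ii: "i < i'"
        show "c i \<le> c i' \<and> r i - c i \<le> r i' - c i'"
        proof (cases "i' = n")
          case False
          then show ?thesis using mono i i' ii unfolding c by auto
        next
          case True
          have ci: "c i = b i" "c i' = y" using ii True unfolding c by auto
          have "b i \<le> b (n - 1) \<and> r i - b i \<le> r (n - 1) - b (n - 1)"
          proof (cases "i = n - 1")
            case False then show ?thesis using mono ii True by auto
          qed simp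
          then have h1: "b i \<le> b (n - 1)" and h2: "r i - b i \<le> r (n - 1) - b (n - 1)" by auto
          have "c i \<le> c i'" using ci h1 y1 by simp
          moreover have "r i - c i \<le> r i' - c i'" unfolding ci using True h2 y2 bn1 rn by arith
          ultimately show ?thesis by simp
        qed
      qed
      show "c \<in> Seq (Suc n) r" unfolding Seq_def using ext cb cm by blast
    qed
  qed
  have "card (Seq (Suc n) r) = card (Sigma (Seq n r) B)" using bij by (rule bij_betw_same_card)
  also have "\<dots> = (\<Sum>b\<in>Seq n r. card (B b))" by (rule card_SigmaI) (auto simp: finite_Seq B_def)
  also have "\<dots> = (\<Sum>b\<in>Seq n r. r n - r (n - 1) + 1)" unfolding B_def by simp
  also have "\<dots> = card (Seq n r) * (r n - r (n - 1) + 1)" by simp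
  finally show ?thesis .
qed

lemma card_Seq:
  assumes "\<And>i. i + 1 < n \<Longrightarrow> r i < r (i + 1)" and "1 \<le> n"
  shows "card (Seq n r) = (r 0 + 1) * (\<Prod>i<n - 1. r (i + 1) - r i + 1)"
  using assms
proof (induction n)
  case 0 then show ?case by simp
next
  case (Suc n)
  show ?case
  proof (cases "n = 0")
    case True then show ?thesis using card_Seq1 by simp
  next
    case False
    then have n: "1 \<le> n" by simp
    have IH: "card (Seq n r) = (r 0 + 1) * (\<Prod>i<n - 1. r (i + 1) - r i + 1)"
      using Suc.IH Suc.prems n by simp
    have "card (Seq (Suc n) r) = card (Seq n r) * (r n - r (n - 1) + 1)"
      by (rule card_Seq_step) (use Suc.prems n in auto)
    also have "\<dots> = (r 0 + 1) * ((\<Prod>i<n - 1. r (i + 1) - r i + 1) * (r (n - 1 + 1) - r (n - 1) + 1))"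
    proof -
      have "n - 1 + 1 = n" using n by simp
      then show ?thesis unfolding IH by (simp only: mult.assoc)
    qed
    also have "\<dots> = (r 0 + 1) * (\<Prod>i<Suc n - 1. r (i + 1) - r i + 1)"
    proof -
      have "Suc n - 1 = Suc (n - 1)" using n by simp
      then show ?thesis by (simp only: prod.lessThan_Suc)
    qed
    finally show ?thesis .
  qed
qed



theorem theorem2:
  fixes m :: nat and p :: "nat \<Rightarrow> nat" and s :: "nat \<Rightarrow> nat"
    and r :: "nat \<Rightarrow> nat \<Rightarrow> nat" and k :: "nat \<Rightarrow> nat \<Rightarrow> nat"
  assumes primes: "\<And>j. j < m \<Longrightarrow> prime (p j)"
    and distinct: "inj_on p {..<m}"
    and s_pos: "\<And>j. j < m \<Longrightarrow> s j \<ge> 1"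
    and r_pos: "\<And>j. j < m \<Longrightarrow> r j 0 \<ge> 1"
    and r_incr: "\<And>j i. j < m \<Longrightarrow> i + 1 < s j \<Longrightarrow> r j i < r j (i + 1)"
    and k_pos: "\<And>j i. j < m \<Longrightarrow> i < s j \<Longrightarrow> k j i \<ge> 1"
  shows "num_aut_orbits (whole_group m p s r k)
           = (\<Prod>j<m. num_aut_orbits (reduced_group (p j) (s j) (r j)))
       \<and> num_aut_orbits (whole_group m p s r k)
           = (\<Prod>j<m. (r j 0 + 1) * (\<Prod>i<s j - 1. r j (i + 1) - r j i + 1))"
proof -
  have rinc: "r j i < r j i'" if "j < m" "i < i'" "i' < s j" for j i i'
    by (rule strict_from_cons[of "s j" "r j" i i', OF r_incr[OF that(1)] that(2,3)])
  have rinj: "i = i'" if "j < m" "i < s j" "i' < s j" "r j i = r j i'" for j i i'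
  proof (rule ccontr)
    assume "i \<noteq> i'"
    then consider "i < i'" | "i' < i" by linarith
    then show False
    proof cases
      case 1 then have "r j i < r j i'" using rinc[OF that(1) _ that(3)] by blast
      then show False using that(4) by simp
    next
      case 2 then have "r j i' < r j i" using rinc[OF that(1) _ that(2)] by blast
      then show False using that(4) by simp
    qed
  qed
  have rlt: "i < i'" if "j < m" "i < s j" "i' < s j" "r j i < r j i'" for j i i'
  proof (rule ccontr)
    assume "\<not> i < i'"
    then consider "i = i'" | "i' < i" by linarith
    then show False
    proof cases
      case 1 then show False using that(4) by simp
    next
      case 2 then have "r j i' < r j i" using rinc[OF that(1) _ that(2)] by blast
      then show False using that(4) by simp
    qed
  qed
  have rge1: "1 \<le> r j i" if "j < m" "i < s j" for j i
  proof (cases "i = 0")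
    case True then show ?thesis using r_pos[OF that(1)] by simp
  next
    case False
    then have "r j 0 < r j i" using rinc[OF that(1), of 0 i] that(2) by simp
    then show ?thesis by simp
  qed
  have cycR: "cyc {..<s j} (\<lambda>_. p j) (r j)" if "j < m" for j
    by unfold_locales (use primes[OF that] rge1[OF that] in auto)
  have GR: "reduced_group (p j) (s j) (r j) = cyc.GG {..<s j} (\<lambda>_. p j) (r j)" if "j < m" for j
    by (simp add: reduced_group_def cyc.GG_def[OF cycR[OF that]])
  have DR: "cyc.D {..<s j} (\<lambda>_. p j) (r j) = Seq (s j) (r j)" if j: "j < m" for j
  proof -
    show ?thesis unfolding cyc.D_def[OF cycR[OF j]] Seq_def
    proof (rule Set.set_eqI)
      fix a :: "nat \<Rightarrow> nat"
      have e1: "(\<forall>t\<in>{..<s j}. \<forall>t'\<in>{..<s j}. r j t = r j t' \<longrightarrow> a t = a t')"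
      proof (intro ballI impI)
        fix t t' assume "t \<in> {..<s j}" "t' \<in> {..<s j}" "r j t = r j t'"
        then have "t = t'" using rinj[OF j, of t t'] by simp
        then show "a t = a t'" by simp
      qed
      have e2: "(\<forall>t\<in>{..<s j}. a t \<le> r j t) \<longleftrightarrow> (\<forall>i<s j. a i \<le> r j i)" by auto
      have e3: "(\<forall>t\<in>{..<s j}. \<forall>t'\<in>{..<s j}. r j t < r j t' \<longrightarrow> a t \<le> a t' \<and> r j t - a t \<le> r j t' - a t') \<longleftrightarrow>
        (\<forall>i<s j. \<forall>i'<s j. i < i' \<longrightarrow> a i \<le> a i' \<and> r j i - a i \<le> r j i' - a i')"
      proof
        assume H: "\<forall>t\<in>{..<s j}. \<forall>t'\<in>{..<s j}. r j t < r j t' \<longrightarrow> a t \<le> a t' \<and> r j t - a t \<le> r j t' - a t'"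
        show "\<forall>i<s j. \<forall>i'<s j. i < i' \<longrightarrow> a i \<le> a i' \<and> r j i - a i \<le> r j i' - a i'"
        proof (intro allI impI)
          fix i i' assume "i < s j" "i' < s j" "i < i'"
          then show "a i \<le> a i' \<and> r j i - a i \<le> r j i' - a i'" using H rinc[OF j] by simp
        qed
      next
        assume H: "\<forall>i<s j. \<forall>i'<s j. i < i' \<longrightarrow> a i \<le> a i' \<and> r j i - a i \<le> r j i' - a i'"
        show "\<forall>t\<in>{..<s j}. \<forall>t'\<in>{..<s j}. r j t < r j t' \<longrightarrow> a t \<le> a t' \<and> r j t - a t \<le> r j t' - a t'"
        proof (intro ballI impI)
          fix i i' assume "i \<in> {..<s j}" "i' \<in> {..<s j}" "r j i < r j i'"
          then have "i < s j" "i' < s j" "i < i'" using rlt[OF j] by auto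
          then show "a i \<le> a i' \<and> r j i - a i \<le> r j i' - a i'" using H by simp
        qed
      qed
      show "a \<in> {a \<in> {..<s j} \<rightarrow>\<^sub>E UNIV. (\<forall>t\<in>{..<s j}. \<forall>t'\<in>{..<s j}. p j = p j \<and> r j t = r j t' \<longrightarrow> a t = a t') \<and>
              (\<forall>t\<in>{..<s j}. a t \<le> r j t) \<and>
              (\<forall>t\<in>{..<s j}. \<forall>t'\<in>{..<s j}. p j = p j \<and> r j t < r j t' \<longrightarrow> a t \<le> a t' \<and> r j t - a t \<le> r j t' - a t')} \<longleftrightarrow>
            a \<in> {b \<in> {..<s j} \<rightarrow>\<^sub>E UNIV. (\<forall>i<s j. b i \<le> r j i) \<and>
              (\<forall>i<s j. \<forall>i'<s j. i < i' \<longrightarrow> b i \<le> b i' \<and> r j i - b i \<le> r j i' - b i')}"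
        by (simp only: mem_Collect_eq e1 e2 e3 simp_thms) (use e1 in blast)
    qed
  qed
  define Iw where "Iw = {(j, i, l). j < m \<and> i < s j \<and> l < k j i}"
  define qw where "qw = (\<lambda>(j::nat, i::nat, l::nat). p j)"
  define ew where "ew = (\<lambda>(j::nat, i::nat, l::nat). r j i)"
  have Iw_eq: "Iw = Sigma {..<m} (\<lambda>j. Sigma {..<s j} (\<lambda>i. {..<k j i}))" unfolding Iw_def by auto
  have cycW: "cyc Iw qw ew"
  proof
    show "finite Iw" unfolding Iw_eq by (intro finite_SigmaI) auto
    fix t assume "t \<in> Iw"
    then obtain j i l where t: "t = (j, i, l)" "j < m" "i < s j" "l < k j i" unfolding Iw_def by blast
    show "prime (qw t)" using primes[OF t(2)] t(1) unfolding qw_def by simp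
    show "1 \<le> ew t" using rge1[OF t(2,3)] t(1) unfolding ew_def by simp
  qed
  have GW: "whole_group m p s r k = cyc.GG Iw qw ew"
  proof -
    have "cyc.GG Iw qw ew = product_group Iw (\<lambda>t. integer_mod_group (qw t ^ ew t))"
      by (rule cyc.GG_def[OF cycW])
    moreover have "(\<lambda>t. integer_mod_group (qw t ^ ew t)) = (\<lambda>(j, i, l). integer_mod_group (p j ^ r j i))"
      unfolding qw_def ew_def by (rule ext) (auto split: prod.splits)
    ultimately show ?thesis unfolding whole_group_def Iw_def by simp
  qed
  have bij: "bij_betw (\<lambda>a. \<lambda>j\<in>{..<m}. \<lambda>i\<in>{..<s j}. a (j, i, 0)) (cyc.D Iw qw ew)
      (\<Pi>\<^sub>E j\<in>{..<m}. Seq (s j) (r j))"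
  proof (rule bij_betw_byWitness[where f' = "\<lambda>b. \<lambda>t\<in>Iw. case t of (j, i, l) \<Rightarrow> b j i"])
    show "\<forall>a\<in>cyc.D Iw qw ew. (\<lambda>t\<in>Iw. case t of (j, i, l) \<Rightarrow> (\<lambda>j\<in>{..<m}. \<lambda>i\<in>{..<s j}. a (j, i, 0)) j i) = a"
    proof
      fix a assume a: "a \<in> cyc.D Iw qw ew"
      show "(\<lambda>t\<in>Iw. case t of (j, i, l) \<Rightarrow> (\<lambda>j\<in>{..<m}. \<lambda>i\<in>{..<s j}. a (j, i, 0)) j i) = a"
      proof
        fix t
        show "(\<lambda>t\<in>Iw. case t of (j, i, l) \<Rightarrow> (\<lambda>j\<in>{..<m}. \<lambda>i\<in>{..<s j}. a (j, i, 0)) j i) t = a t"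
        proof (cases "t \<in> Iw")
          case False
          have "a t = undefined" using cyc.D_ext[OF cycW a] False by (rule extensional_arb)
          then show ?thesis using False by simp
        next
          case True
          then obtain j i l where t: "t = (j, i, l)" "j < m" "i < s j" "l < k j i" unfolding Iw_def by blast
          have t0: "(j, i, 0) \<in> Iw" using k_pos[OF t(2,3)] t unfolding Iw_def by simp
          have "a (j, i, 0) = a (j, i, l)"
            by (rule cyc.D_blk[OF cycW a t0]) (use True t in \<open>auto simp: qw_def ew_def\<close>)
          then show ?thesis using True t by simp
        qed
      qed
    qed
    show "\<forall>b\<in>\<Pi>\<^sub>E j\<in>{..<m}. Seq (s j) (r j). (\<lambda>j\<in>{..<m}. \<lambda>i\<in>{..<s j}. (\<lambda>t\<in>Iw. case t of (j, i, l) \<Rightarrow> b j i) (j, i, 0)) = b"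
    proof
      fix b assume b: "b \<in> (\<Pi>\<^sub>E j\<in>{..<m}. Seq (s j) (r j))"
      show "(\<lambda>j\<in>{..<m}. \<lambda>i\<in>{..<s j}. (\<lambda>t\<in>Iw. case t of (j, i, l) \<Rightarrow> b j i) (j, i, 0)) = b"
      proof
        fix j
        show "(\<lambda>j\<in>{..<m}. \<lambda>i\<in>{..<s j}. (\<lambda>t\<in>Iw. case t of (j, i, l) \<Rightarrow> b j i) (j, i, 0)) j = b j"
        proof (cases "j < m")
          case False
          then show ?thesis using b by (auto simp: PiE_def extensional_def)
        next
          case True
          have bj: "b j \<in> Seq (s j) (r j)" using b True by auto
          show ?thesis
          proof
            fix i
            show "(\<lambda>j\<in>{..<m}. \<lambda>i\<in>{..<s j}. (\<lambda>t\<in>Iw. case t of (j, i, l) \<Rightarrow> b j i) (j, i, 0)) j i = b j i"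
            proof (cases "i < s j")
              case False
              then show ?thesis using bj True unfolding Seq_def by (auto simp: PiE_def extensional_def)
            next
              case i: True
              have "(j, i, 0) \<in> Iw" using k_pos[OF True i] True i unfolding Iw_def by simp
              then show ?thesis using True i by simp
            qed
          qed
        qed
      qed
    qed
    show "(\<lambda>a. \<lambda>j\<in>{..<m}. \<lambda>i\<in>{..<s j}. a (j, i, 0)) ` cyc.D Iw qw ew \<subseteq> (\<Pi>\<^sub>E j\<in>{..<m}. Seq (s j) (r j))"
    proof
      fix c assume "c \<in> (\<lambda>a. \<lambda>j\<in>{..<m}. \<lambda>i\<in>{..<s j}. a (j, i, 0)) ` cyc.D Iw qw ew"
      then obtain a where a: "a \<in> cyc.D Iw qw ew" and c: "c = (\<lambda>j\<in>{..<m}. \<lambda>i\<in>{..<s j}. a (j, i, 0))" by blast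
      have mem: "(j, i, 0) \<in> Iw" if "j < m" "i < s j" for j i using k_pos[OF that] that unfolding Iw_def by simp
      have "(\<lambda>i\<in>{..<s j}. a (j, i, 0)) \<in> Seq (s j) (r j)" if j: "j < m" for j
      proof -
        have "\<forall>i<s j. a (j, i, 0) \<le> r j i"
          using cyc.D_le[OF cycW a mem[OF j]] by (simp add: ew_def)
        moreover have "\<forall>i<s j. \<forall>i'<s j. i < i' \<longrightarrow> a (j, i, 0) \<le> a (j, i', 0) \<and> r j i - a (j, i, 0) \<le> r j i' - a (j, i', 0)"
        proof (intro allI impI)
          fix i i' assume "i < s j" "i' < s j" "i < i'"
          then show "a (j, i, 0) \<le> a (j, i', 0) \<and> r j i - a (j, i, 0) \<le> r j i' - a (j, i', 0)"
            using cyc.D_mono[OF cycW a mem[OF j] mem[OF j]] rinc[OF j] by (simp add: qw_def ew_def)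
        qed
        ultimately show ?thesis unfolding Seq_def by auto
      qed
      then show "c \<in> (\<Pi>\<^sub>E j\<in>{..<m}. Seq (s j) (r j))" unfolding c by auto
    qed
    show "(\<lambda>b. \<lambda>t\<in>Iw. case t of (j, i, l) \<Rightarrow> b j i) ` (\<Pi>\<^sub>E j\<in>{..<m}. Seq (s j) (r j)) \<subseteq> cyc.D Iw qw ew"
    proof
      fix a assume "a \<in> (\<lambda>b. \<lambda>t\<in>Iw. case t of (j, i, l) \<Rightarrow> b j i) ` (\<Pi>\<^sub>E j\<in>{..<m}. Seq (s j) (r j))"
      then obtain b where b: "b \<in> (\<Pi>\<^sub>E j\<in>{..<m}. Seq (s j) (r j))" and a: "a = (\<lambda>t\<in>Iw. case t of (j, i, l) \<Rightarrow> b j i)" by blast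
      have bnd: "b j i \<le> r j i" if "j < m" "i < s j" for j i
      proof -
        have "b j \<in> Seq (s j) (r j)" using b that(1) by (simp add: PiE_iff)
        then have "\<forall>i<s j. b j i \<le> r j i" by (simp add: Seq_def)
        then show ?thesis using that(2) by simp
      qed
      have mon: "b j i \<le> b j i' \<and> r j i - b j i \<le> r j i' - b j i'" if "j < m" "i < s j" "i' < s j" "i < i'" for j i i'
      proof -
        have "b j \<in> Seq (s j) (r j)" using b that(1) by (simp add: PiE_iff)
        then have "\<forall>i<s j. \<forall>i'<s j. i < i' \<longrightarrow> b j i \<le> b j i' \<and> r j i - b j i \<le> r j i' - b j i'"
          by (simp add: Seq_def)
        then show ?thesis using that(2,3,4) by simp
      qed
      have A: "a \<in> Iw \<rightarrow>\<^sub>E (UNIV::nat set)" unfolding a by simp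
      have B: "\<forall>t\<in>Iw. \<forall>t'\<in>Iw. qw t = qw t' \<and> ew t = ew t' \<longrightarrow> a t = a t'"
      proof (intro ballI impI)
        fix t t' assume t: "t \<in> Iw" and t': "t' \<in> Iw" and eq: "qw t = qw t' \<and> ew t = ew t'"
        obtain j i l where tt: "t = (j, i, l)" "j < m" "i < s j" using t unfolding Iw_def by blast
        obtain j' i' l' where tt': "t' = (j', i', l')" "j' < m" "i' < s j'" using t' unfolding Iw_def by blast
        have pj: "p j = p j'" using eq tt(1) tt'(1) unfolding qw_def by simp
        have jj: "j = j'" using inj_onD[OF distinct pj] tt(2) tt'(2) by simp
        have rj: "r j i = r j i'" using eq tt(1) tt'(1) jj unfolding ew_def by simp
        have ii: "i = i'" using rinj[OF tt(2) tt(3) _ rj] tt'(3) jj by simp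
        have "a t = b j i" using t tt(1) unfolding a by simp
        moreover have "a t' = b j' i'" using t' tt'(1) unfolding a by simp
        ultimately show "a t = a t'" using jj ii by simp
      qed
      have C: "\<forall>t\<in>Iw. a t \<le> ew t"
      proof
        fix t assume t: "t \<in> Iw"
        obtain j i l where tt: "t = (j, i, l)" "j < m" "i < s j" using t unfolding Iw_def by blast
        show "a t \<le> ew t" using bnd[OF tt(2,3)] t tt unfolding a ew_def by simp
      qed
      have E: "\<forall>t\<in>Iw. \<forall>t'\<in>Iw. qw t = qw t' \<and> ew t < ew t' \<longrightarrow> a t \<le> a t' \<and> ew t - a t \<le> ew t' - a t'"
      proof (intro ballI impI)
        fix t t' assume t: "t \<in> Iw" and t': "t' \<in> Iw" and eq: "qw t = qw t' \<and> ew t < ew t'"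
        obtain j i l where tt: "t = (j, i, l)" "j < m" "i < s j" using t unfolding Iw_def by blast
        obtain j' i' l' where tt': "t' = (j', i', l')" "j' < m" "i' < s j'" using t' unfolding Iw_def by blast
        have pj: "p j = p j'" using eq tt(1) tt'(1) unfolding qw_def by simp
        have jj: "j = j'" using inj_onD[OF distinct pj] tt(2) tt'(2) by simp
        have rj: "r j i < r j i'" using eq tt(1) tt'(1) jj unfolding ew_def by simp
        have i's: "i' < s j" using tt'(3) jj by simp
        have ii: "i < i'" using rlt[OF tt(2) tt(3) i's rj] .
        have at: "a t = b j i" using t tt(1) unfolding a by simp
        have at': "a t' = b j i'" using t' tt'(1) jj unfolding a by simp
        have "ew t = r j i" "ew t' = r j i'" using tt(1) tt'(1) jj unfolding ew_def by simp_all
        then show "a t \<le> a t' \<and> ew t - a t \<le> ew t' - a t'"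
          using mon[OF tt(2,3) i's ii] at at' by simp
      qed
      show "a \<in> cyc.D Iw qw ew" unfolding cyc.D_def[OF cycW] by (simp only: mem_Collect_eq) (intro conjI A B C E)
    qed
  qed
  have cardW: "card (cyc.D Iw qw ew) = (\<Prod>j<m. card (Seq (s j) (r j)))"
    using bij_betw_same_card[OF bij] by (simp add: card_PiE)
  have numW: "num_aut_orbits (whole_group m p s r k) = (\<Prod>j<m. card (Seq (s j) (r j)))"
    unfolding GW cyc.num_orbits_GG[OF cycW] cardW ..
  have numR: "num_aut_orbits (reduced_group (p j) (s j) (r j)) = card (Seq (s j) (r j))" if "j < m" for j
    unfolding GR[OF that] cyc.num_orbits_GG[OF cycR[OF that]] DR[OF that] ..
  have cardS: "card (Seq (s j) (r j)) = (r j 0 + 1) * (\<Prod>i<s j - 1. r j (i + 1) - r j i + 1)" if "j < m" for j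
    by (rule card_Seq) (use r_incr[OF that] s_pos[OF that] in auto)
  show ?thesis
    unfolding numW using numR cardS by (auto intro: prod.cong)
qed


end
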